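(* Fix $\mu>0$. For $r\in(0,1)$ consider the equation in the unknown $\kappa\in(0,2\pi)$ $$\frac{4}{\kappa}\tan\frac{\kappa}{4}=\Big(\frac{1-r^2/48}{1-7r^2/48}\Big)\Big[1-\frac{\kappa^2}{\mu}\Big].$$ For each such $r$ this equation has exactly one root $\kappa(r)\in(0,2\pi)$, and $$\lim_{r\to0^+}\frac{\kappa(r)}{r}=\sqrt{\frac{6}{1+48/\mu}} .$$ Consequently, writing $\kappa=kh$ and $r=h/H$, the corresponding wavenumber satisfies $kH\to\sqrt{6/(1+48/\mu)}$, and this limit equals $\pi/2$ if and only if $\frac1\mu=\frac{24/\pi^2-1}{48}$, i.e. $\mu=\frac{48}{24/\pi^2-1}\approx 33.53$.
   Context: This equation is the non-trivial factor of the characteristic equation for symmetric eigenmodes $e^{-Kk^2t}\phi(x)$ of a $2h$-periodic patch heat problem with proportional control of strength $\mu$ in two action regions, where $r=h/H$ is the ratio of patch half-width $h$ to macroscale half-width $H$; $\pi/2$ is the value of $kH$ for the slowest mode $\cos(\pi x/(2H))$ of the heat equation on $(-H,H)$ with Dirichlet conditions. *)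

theory Defs
  imports Complex_Main
begin

definition char_eq :: "real \<Rightarrow> real \<Rightarrow> real \<Rightarrow> bool" where
  "char_eq \<mu> r \<kappa> \<longleftrightarrow>
     (4 / \<kappa>) * tan (\<kappa> / 4) =
       ((1 - r^2 / 48) / (1 - 7 * r^2 / 48)) * (1 - \<kappa>^2 / \<mu>)"

text \<open>The root kappa(r) in (0, 2 pi) (meaningful once uniqueness is established).\<close>
definition kappa_root :: "real \<Rightarrow> real \<Rightarrow> real" where
  "kappa_root \<mu> r = (THE \<kappa>. \<kappa> \<in> {0<..<2*pi} \<and> char_eq \<mu> r \<kappa>)"

end

theory Submission imports Defs "HOL-Real_Asymp.Real_Asymp" begin

lemma tan_ge_self:
  fixes u :: real assumes "0 \<le> u" "u < pi/2" shows "u \<le> tan u"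
proof -
  have "(\<lambda>x. tan x - x) 0 \<le> (\<lambda>x. tan x - x) u"
  proof (rule DERIV_nonneg_imp_nondecreasing[OF assms(1)])
    fix x assume x: "0 \<le> x" "x \<le> u"
    have c: "cos x > 0" using x assms by (intro cos_gt_zero_pi) auto
    have "cos x ^ 2 \<le> 1" using c cos_le_one[of x] by (simp add: power_le_one)
    hence "inverse (cos x ^ 2) - 1 \<ge> 0" using c by (simp add: field_simps)
    moreover have "DERIV (\<lambda>x. tan x - x) x :> inverse (cos x ^ 2) - 1"
      using c by (auto intro!: derivative_eq_intros)
    ultimately show "\<exists>y. DERIV (\<lambda>x. tan x - x) x :> y \<and> y \<ge> 0" by blast
  qed
  thus ?thesis by simp
qed

lemma tan_div_mono:
  fixes a b :: real assumes "0 < a" "a < b" "b < pi/2" shows "tan a / a < tan b / b"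
proof (rule DERIV_pos_imp_increasing[OF assms(2)])
  fix x assume x: "a \<le> x" "x \<le> b"
  have x0: "x > 0" "x < pi/2" using x assms by auto
  have c: "cos x > 0" using x0 by (intro cos_gt_zero_pi) auto
  have c1: "cos x < 1" using cos_monotone_0_pi[of 0 x] x0 by simp
  have s: "sin x > 0" using x0 by (intro sin_gt_zero) auto
  have "sin x \<le> x" using sin_x_le_x x0 by simp
  moreover have "sin x * cos x < sin x" using mult_strict_left_mono[OF c1 s] by simp
  ultimately have sc: "sin x * cos x < x" by linarith
  have D: "DERIV (\<lambda>x. tan x / x) x :> (inverse (cos x ^ 2) * x - tan x * 1) / (x * x)"
    using c x0 by (intro DERIV_divide DERIV_tan DERIV_ident) auto
  have "inverse (cos x ^ 2) * x - tan x = (x - sin x * cos x) / cos x ^ 2"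
    using c by (simp add: tan_def field_simps power2_eq_square)
  also have "\<dots> > 0" using sc c by simp
  finally have "(inverse (cos x ^ 2) * x - tan x * 1) / (x * x) > 0" using x0 by simp
  with D show "\<exists>y. DERIV (\<lambda>x. tan x / x) x :> y \<and> y > 0" by blast
qed

lemma root_ex1:
  fixes \<mu> c :: real assumes mu: "\<mu> > 0" and c: "c > 1"
  shows "\<exists>!\<kappa>. \<kappa> \<in> {0<..<2*pi} \<and> (4/\<kappa>)*tan(\<kappa>/4) = c*(1-\<kappa>^2/\<mu>)"
proof -
  define h where "h = (\<lambda>\<kappa>::real. (4/\<kappa>)*tan(\<kappa>/4) - c*(1-\<kappa>^2/\<mu>))"
  have F: "(4/x)*tan(x/4) = tan (x/4) / (x/4)" for x :: real by simp
  have mono: "h x < h y" if "0 < x" "x < y" "y < 2*pi" for x y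
  proof -
    have "tan (x/4) / (x/4) < tan (y/4) / (y/4)" using that by (intro tan_div_mono) auto
    moreover have "x^2 < y^2" using that by (intro power_strict_mono) auto
    hence "x^2/\<mu> < y^2/\<mu>" using mu by (simp add: divide_strict_right_mono)
    hence "c*(1-y^2/\<mu>) < c*(1-x^2/\<mu>)" using c by simp
    ultimately show ?thesis unfolding h_def F by linarith
  qed
  have "((\<lambda>k::real. (4/k)*(sin(k/4)/cos(k/4))) \<longlongrightarrow> 1) (at_right 0)" by real_asymp
  hence L1: "((\<lambda>k::real. (4/k)*tan(k/4)) \<longlongrightarrow> 1) (at_right 0)" by (simp add: tan_def)
  have L2: "((\<lambda>k::real. c*(1-k^2/\<mu>)) \<longlongrightarrow> c*(1-0^2/\<mu>)) (at_right 0)"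
    using mu by (intro tendsto_intros) auto
  have "(h \<longlongrightarrow> 1 - c*(1-0^2/\<mu>)) (at_right 0)" unfolding h_def by (intro tendsto_intros L1 L2)
  hence "eventually (\<lambda>k. h k < 0) (at_right 0)" using c by (intro order_tendstoD(2)) auto
  then obtain b where b: "b > 0" "\<And>y. y > 0 \<Longrightarrow> y < b \<Longrightarrow> h y < 0"
    unfolding eventually_at_right_field by auto
  define a where "a = min (b/2) pi"
  have a1: "0 < a" unfolding a_def using b pi_gt_zero by simp
  have a2: "a \<le> pi" "a \<le> b/2" unfolding a_def by simp_all
  have a: "0 < a" "a < 2*pi" "h a < 0" using a1 a2 pi_gt_zero b(2)[of a] b(1) by auto
  obtain x where x: "0 < x" "x < pi/2" "c*pi/2 < tan x" using lemma_tan_total[of "c*pi/2"] c by auto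
  define B where "B = 4*x"
  have "c*pi/2 > 0" using c pi_gt_zero by simp
  hence tx: "tan x > 0" using x by linarith
  have "tan x / (pi/2) < tan x / x" using x tx by (intro divide_strict_left_mono) auto
  moreover have "c < tan x / (pi/2)" using x by (simp add: field_simps)
  moreover have "c*(1-B^2/\<mu>) \<le> c" using c mu by (simp add: field_simps)
  ultimately have hB: "h B > 0" unfolding h_def B_def F by simp
  have B: "0 < B" "B < 2*pi" using x unfolding B_def by auto
  have aB: "a \<le> B"
  proof (rule ccontr)
    assume "\<not> a \<le> B" hence "h B < h a" using B a by (intro mono) auto
    thus False using a hB by simp
  qed
  have cosnz: "\<forall>k\<in>{a..B}. cos (k/4) \<noteq> 0"
  proof
    fix k assume k: "k \<in> {a..B}"
    hence "0 < k/4" "k/4 < pi/2" using a B by auto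
    thus "cos (k/4) \<noteq> 0" using cos_gt_zero_pi[of "k/4"] by auto
  qed
  have nz: "\<forall>k\<in>{a..B}. k \<noteq> 0" using a by auto
  have "continuous_on {a..B} h" unfolding h_def
    using cosnz nz mu by (intro continuous_intros) auto
  then obtain k where k: "a \<le> k" "k \<le> B" "h k = 0" using IVT'[of h a 0 B] a hB aB by auto
  show ?thesis
  proof (rule ex1I[where a=k])
    show "k \<in> {0<..<2*pi} \<and> (4/k)*tan(k/4) = c*(1-k^2/\<mu>)" using k a B unfolding h_def by auto
    fix y assume y: "y \<in> {0<..<2*pi} \<and> (4/y)*tan(y/4) = c*(1-y^2/\<mu>)"
    hence hy: "h y = 0" unfolding h_def by simp
    show "y = k"
    proof (rule ccontr)
      assume "y \<noteq> k"
      hence "y < k \<or> k < y" by auto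
      thus False using mono[of y k] mono[of k y] y k a B hy by auto
    qed
  qed
qed

lemma per_r:
  fixes \<mu> r k :: real
  assumes mu: "\<mu> > 0" and r: "0 < r" "r < 1" and k: "0 < k" "k < 2*pi" and ce: "char_eq \<mu> r k"
  shows "k/r = sqrt (16*(6/(48-7*r^2)) / ((tan (k/4) - k/4)/(k/4)^3 + 16*((1-r^2/48)/(1-7*r^2/48))/\<mu>))"
    and "k \<le> sqrt (6*\<mu>/41) * r"
proof -
  define u where "u = k/4"
  define c where "c = (1-r^2/48)/(1-7*r^2/48)"
  define p where "p = (tan u - u)/u^3"
  have kk: "k = 4*u" by (simp add: u_def)
  have u: "0 < u" "u < pi/2" using k by (auto simp: u_def)
  have r2: "r^2 < 1" "0 < r^2" using r by (auto simp: power_less_one_iff)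
  have d: "48 - 7*r^2 > 0" using r2 by simp
  have c1: "c - 1 = 6*r^2/(48-7*r^2)" unfolding c_def using d by (simp add: field_simps)
  have "6*r^2/(48-7*r^2) > 0" using d r2 by (intro divide_pos_pos) auto
  hence cg: "c > 1" using c1 by linarith
  have "(4/k)*tan(k/4) = c*(1-k^2/\<mu>)" using ce unfolding char_eq_def c_def by simp
  hence E: "tan u / u = c*(1-16*u^2/\<mu>)" unfolding kk by (simp add: power_mult_distrib)
  have p0: "p \<ge> 0" unfolding p_def using tan_ge_self[of u] u by simp
  have P: "tan u / u - 1 = u^2 * p" unfolding p_def using u by (simp add: field_simps power3_eq_cube power2_eq_square)
  have G: "u^2 * (p + 16*c/\<mu>) = c - 1"
  proof -
    have "u^2 * (p + 16*c/\<mu>) = u^2*p + c*(16*u^2/\<mu>)" by (simp add: algebra_simps)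
    also have "\<dots> = c - 1" using E P by (simp add: algebra_simps)
    finally show ?thesis .
  qed
  define D where "D = p + 16*c/\<mu>"
  have Dp: "D > 0" unfolding D_def using p0 cg mu by (simp add: add_nonneg_pos)
  have "(k/r)^2 = 16*u^2/r^2" unfolding kk by (simp add: power_divide power_mult_distrib)
  also have "u^2 = (c-1)/D" using G Dp unfolding D_def by (simp add: field_simps)
  also have "16*((c-1)/D)/r^2 = 16*((c-1)/r^2)/D" by simp
  also have "(c-1)/r^2 = 6/(48-7*r^2)" unfolding c1 using r by simp
  finally have "(k/r)^2 = 16*(6/(48-7*r^2))/D" .
  hence "sqrt (16*(6/(48-7*r^2))/D) = \<bar>k/r\<bar>" by (metis real_sqrt_abs)
  also have "\<dots> = k/r" using k r by simp
  finally show "k/r = sqrt (16*(6/(48-7*r^2)) / ((tan (k/4) - k/4)/(k/4)^3 + 16*((1-r^2/48)/(1-7*r^2/48))/\<mu>))"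
    unfolding D_def p_def u_def c_def by simp
  have "u^2*p \<ge> 0" using p0 by simp
  moreover have "u^2*p + u^2*(16*c/\<mu>) = c-1" using G by (simp add: distrib_left)
  ultimately have "u^2 * (16*c/\<mu>) \<le> c - 1" by linarith
  hence "16*u^2 * c \<le> (c-1)*\<mu>" using mu by (simp add: field_simps)
  moreover have "16*u^2*1 \<le> 16*u^2*c" using cg by (intro mult_left_mono) auto
  ultimately have "k^2 \<le> (c-1)*\<mu>" unfolding kk by (simp add: power_mult_distrib)
  also have "(c-1)*\<mu> \<le> 6*r^2/41 * \<mu>" unfolding c1 using d r2 mu
    by (intro mult_right_mono divide_left_mono) auto
  also have "6*r^2/41 * \<mu> = 6*\<mu>/41 * r^2" by simp
  finally have "k^2 \<le> 6*\<mu>/41 * r^2" .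
  hence "sqrt (k^2) \<le> sqrt (6*\<mu>/41 * r^2)" by (rule real_sqrt_le_mono)
  moreover have "sqrt (6*\<mu>/41 * r^2) = sqrt (6*\<mu>/41) * r" using r by (simp only: real_sqrt_mult real_sqrt_abs)
  moreover have "sqrt (k^2) = k" using k by simp
  ultimately show "k \<le> sqrt (6*\<mu>/41) * r" by simp
qed

theorem mainTheorem4:
  fixes \<mu> :: real
  assumes "\<mu> > 0"
  shows "(\<forall>r \<in> {0<..<1}. \<exists>!\<kappa>. \<kappa> \<in> {0<..<2*pi} \<and> char_eq \<mu> r \<kappa>)
    \<and> ((\<lambda>r. kappa_root \<mu> r / r) \<longlongrightarrow> sqrt (6 / (1 + 48 / \<mu>))) (at_right 0)
    \<and> (sqrt (6 / (1 + 48 / \<mu>)) = pi / 2 \<longleftrightarrow> 1 / \<mu> = (24 / pi^2 - 1) / 48)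
    \<and> (sqrt (6 / (1 + 48 / \<mu>)) = pi / 2 \<longleftrightarrow> \<mu> = 48 / (24 / pi^2 - 1))"
proof -
  note mu = assms
  have P1: "\<forall>r \<in> {0<..<1}. \<exists>!\<kappa>. \<kappa> \<in> {0<..<2*pi} \<and> char_eq \<mu> r \<kappa>"
  proof
    fix r :: real assume r: "r \<in> {0<..<1}"
    have r2: "r^2 < 1" "0 < r^2" using r by (auto simp: power_less_one_iff)
    have d: "48 - 7*r^2 > 0" using r2 by simp
    have "(1-r^2/48)/(1-7*r^2/48) - 1 = 6*r^2/(48-7*r^2)" using d by (simp add: field_simps)
    moreover have "6*r^2/(48-7*r^2) > 0" using d r2 by (intro divide_pos_pos) auto
    ultimately have "(1-r^2/48)/(1-7*r^2/48) > 1" by linarith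
    from root_ex1[OF mu this] show "\<exists>!\<kappa>. \<kappa> \<in> {0<..<2*pi} \<and> char_eq \<mu> r \<kappa>"
      unfolding char_eq_def .
  qed
  define K where "K = kappa_root \<mu>"
  have Kp: "K r \<in> {0<..<2*pi} \<and> char_eq \<mu> r (K r)" if "r \<in> {0<..<1}" for r
    unfolding K_def kappa_root_def using theI'[OF P1[rule_format, OF that]] .
  have ev: "eventually (\<lambda>r. r \<in> {0<..<1}) (at_right (0::real))"
    unfolding eventually_at_right_field by (intro exI[of _ 1]) auto
  define \<phi> where "\<phi> = (\<lambda>u::real. (tan u - u)/u^3)"
  define c where "c = (\<lambda>r::real. (1-r^2/48)/(1-7*r^2/48))"
  define R where "R = (\<lambda>r. sqrt (16*(6/(48-7*r^2)) / (\<phi> (K r/4) + 16*c r/\<mu>)))"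
  have eq: "eventually (\<lambda>r. R r = K r / r) (at_right 0)"
    using ev
  proof (rule eventually_mono)
    fix r :: real assume r: "r \<in> {0<..<1}"
    show "R r = K r / r" using per_r(1)[OF mu _ _ _ _ conjunct2[OF Kp[OF r]]] Kp[OF r] r
      unfolding R_def \<phi>_def c_def by auto
  qed
  have Kle: "eventually (\<lambda>r. K r \<le> sqrt (6*\<mu>/41) * r) (at_right 0)"
    using ev
  proof (rule eventually_mono)
    fix r :: real assume r: "r \<in> {0<..<1}"
    show "K r \<le> sqrt (6*\<mu>/41) * r" using per_r(2)[OF mu _ _ _ _ conjunct2[OF Kp[OF r]]] Kp[OF r] r
      by auto
  qed
  have Kpos: "eventually (\<lambda>r. 0 < K r) (at_right 0)"
    using ev by (rule eventually_mono) (use Kp in auto)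
  have "(K \<longlongrightarrow> 0) (at_right 0)"
  proof (rule tendsto_sandwich[of "\<lambda>r. 0" K _ "\<lambda>r. sqrt (6*\<mu>/41) * r"])
    show "eventually (\<lambda>r. 0 \<le> K r) (at_right 0)" using Kpos by (rule eventually_mono) simp
    show "eventually (\<lambda>r. K r \<le> sqrt (6*\<mu>/41) * r) (at_right 0)" by (rule Kle)
    show "((\<lambda>r. 0) \<longlongrightarrow> (0::real)) (at_right 0)" by simp
    have "((\<lambda>r::real. sqrt (6*\<mu>/41) * r) \<longlongrightarrow> sqrt (6*\<mu>/41) * 0) (at_right 0)"
      by (intro tendsto_intros)
    thus "((\<lambda>r::real. sqrt (6*\<mu>/41) * r) \<longlongrightarrow> 0) (at_right 0)" by simp
  qed
  hence "((\<lambda>r. K r / 4) \<longlongrightarrow> 0 / 4) (at_right 0)" by (intro tendsto_intros) simp_all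
  hence "filterlim (\<lambda>r. K r / 4) (at_right 0) (at_right 0)"
    using Kpos by (intro tendsto_imp_filterlim_at_right) (auto elim: eventually_mono)
  moreover have "(\<phi> \<longlongrightarrow> 1/3) (at_right 0)"
  proof -
    have "((\<lambda>u::real. (sin u / cos u - u)/u^3) \<longlongrightarrow> 1/3) (at_right 0)" by real_asymp
    thus ?thesis unfolding \<phi>_def tan_def .
  qed
  ultimately have phiK: "((\<lambda>r. \<phi> (K r / 4)) \<longlongrightarrow> 1/3) (at_right 0)"
    by (rule filterlim_compose[rotated])
  have cl: "(c \<longlongrightarrow> (1-0^2/48)/(1-7*0^2/48)) (at_right 0)" unfolding c_def
    by (intro tendsto_intros) auto
  have "1/3 + 16/\<mu> > 0" using mu by (simp add: add_pos_pos)
  have "(R \<longlongrightarrow> sqrt (16*(6/(48-7*0^2)) / (1/3 + 16*((1-0^2/48)/(1-7*0^2/48))/\<mu>))) (at_right 0)"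
    unfolding R_def using mu \<open>1/3 + 16/\<mu> > 0\<close>
    by (intro tendsto_intros phiK cl) auto
  moreover have "sqrt (16*(6/(48-7*0^2)) / (1/3 + 16*((1-0^2/48)/(1-7*0^2/48))/\<mu>)) = sqrt (6 / (1 + 48 / \<mu>))"
    using mu by (simp add: field_simps)
  ultimately have "(R \<longlongrightarrow> sqrt (6 / (1 + 48 / \<mu>))) (at_right 0)" by simp
  hence P2: "((\<lambda>r. kappa_root \<mu> r / r) \<longlongrightarrow> sqrt (6 / (1 + 48 / \<mu>))) (at_right 0)"
    unfolding K_def[symmetric] using tendsto_cong[OF eq] by simp
  have A: "1 + 48/\<mu> > 0" using mu by (intro add_pos_pos) simp_all
  have P3: "sqrt (6 / (1 + 48 / \<mu>)) = pi / 2 \<longleftrightarrow> 1 / \<mu> = (24 / pi^2 - 1) / 48"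
  proof -
    have "sqrt (6 / (1 + 48 / \<mu>)) = pi / 2 \<longleftrightarrow> 6 / (1 + 48 / \<mu>) = (pi/2)^2"
      using A pi_gt_zero by (metis divide_nonneg_nonneg less_eq_real_def real_sqrt_pow2 real_sqrt_unique zero_le_numeral zero_less_power2)
    also have "\<dots> \<longleftrightarrow> 1 / \<mu> = (24 / pi^2 - 1) / 48"
      using A mu pi_gt_zero by (auto simp: field_simps power2_eq_square)
    finally show ?thesis .
  qed
  have P4: "1 / \<mu> = (24 / pi^2 - 1) / 48 \<longleftrightarrow> \<mu> = 48 / (24 / pi^2 - 1)"
  proof (cases "24 / pi^2 - 1 = 0")
    case True thus ?thesis using mu by simp
  next
    case False thus ?thesis using mu by (auto simp: field_simps)
  qed
  show ?thesis using P1 P2 P3 P4 by simp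
qed

end
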